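(* Assume the standing setup and let $I\subseteq[k]$ be such that $\{\alpha_l\mid l\in I\}$ is a basis of $V_1$ (so that $\{\beta_l\mid l\in I\}$ is a basis of $V_2$). Let $h\in[k]\setminus I$ and $j\in I$, and write $\alpha_h=\sum_{l\in I}a_l\alpha_l$, $\beta_h=\sum_{l\in I}b_l\beta_l$ with $a_l,b_l\in\mathbb{F}$. If $a_j\neq0$, then for any distinct $i_2,\dots,i_d\in I\setminus\{j\}$, we have $$\zeta_{j,i_2,\dots,i_d}\,a_j=\zeta_{h,i_2,\dots,i_d}\,b_j,$$ where $\zeta_{l_1,\dots,l_d}$ denotes the nonzero scalar with $\psi(\alpha_{l_1}\wedge\cdots\wedge\alpha_{l_d})=\zeta_{l_1,\dots,l_d}\,\beta_{l_1}\wedge\cdots\wedge\beta_{l_d}$ (which exists for both index tuples $(j,i_2,\dots,i_d)$ and $(h,i_2,\dots,i_d)$).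
   Context: Standing setup: $\mathbb{F}$ is a field of characteristic $0$; $W$ is a group with finite generating set $S=\{s_1,\dots,s_k\}$. A linear map on a finite-dimensional space is a (generalized) reflection if it is diagonalizable and $s-\operatorname{Id}$ has rank $1$; a reflection vector is a nonzero vector in $\operatorname{Im}(s-\operatorname{Id})$. $(V_1,\rho_1)$, $(V_2,\rho_2)$ are irreducible reflection representations of $(W,S)$ (each $s_i$ acts by a reflection), both of dimension $n$. For each $i\in[k]$, $\alpha_i\in V_1$ is a chosen reflection vector of $s_i$ and $\beta_i\in V_2$ a chosen reflection vector of $s_i$. $d$ is an integer with $1\le d\le n-1$, and $\psi:\bigwedge^dV_1\to\bigwedge^dV_2$ is an isomorphism of $W$-modules ($W$ acting diagonally). Whenever $\alpha_{l_1},\dots,\alpha_{l_d}$ are linearly independent, so are $\beta_{l_1},\dots,\beta_{l_d}$, and $\psi$ maps $\alpha_{l_1}\wedge\cdots\wedge\alpha_{l_d}$ to a nonzero multiple of $\beta_{l_1}\wedge\cdots\wedge\beta_{l_d}$. *)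

theory Defs
  imports "HOL-Analysis.Analysis" "HOL-Algebra.Generated_Groups"
begin

definition diagonal_mat :: "'a::zero ^'n^'n \<Rightarrow> bool" where
  "diagonal_mat D \<longleftrightarrow> (\<forall>i j. i \<noteq> j \<longrightarrow> D $ i $ j = 0)"

definition diagonalizable_mat :: "'a::field ^'n^'n \<Rightarrow> bool" where
  "diagonalizable_mat A \<longleftrightarrow> (\<exists>(P::'a^'n^'n) (D::'a^'n^'n). invertible P \<and> diagonal_mat D \<and> A ** P = P ** D)"

definition is_reflection :: "'a::field ^'n^'n \<Rightarrow> bool" where
  "is_reflection A \<longleftrightarrow> diagonalizable_mat A \<and> rank (A - mat 1) = 1"

definition reflection_vector :: "'a::field ^'n^'n \<Rightarrow> 'a^'n \<Rightarrow> bool" where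
  "reflection_vector A v \<longleftrightarrow> v \<noteq> 0 \<and> v \<in> range (\<lambda>u. (A - mat 1) *v u)"

definition is_rep :: "('w, 'b) monoid_scheme \<Rightarrow> ('w \<Rightarrow> 'a::field ^'n^'n) \<Rightarrow> bool" where
  "is_rep W \<rho> \<longleftrightarrow> \<rho> \<one>\<^bsub>W\<^esub> = mat 1 \<and>
     (\<forall>g\<in>carrier W. \<forall>h\<in>carrier W. \<rho> (g \<otimes>\<^bsub>W\<^esub> h) = \<rho> g ** \<rho> h)"

text \<open>Irreducible: the only W-invariant subspaces are 0 and the whole space
  (the space F^n is nonzero since types are nonempty).\<close>
definition irreducible_rep :: "('w, 'b) monoid_scheme \<Rightarrow> ('w \<Rightarrow> 'a::field ^'n^'n) \<Rightarrow> bool" where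
  "irreducible_rep W \<rho> \<longleftrightarrow>
     (\<forall>U. vec.subspace U \<and> (\<forall>g\<in>carrier W. \<forall>u\<in>U. \<rho> g *v u \<in> U) \<longrightarrow> U = {0} \<or> U = UNIV)"

definition reflection_rep ::
  "('w, 'b) monoid_scheme \<Rightarrow> (nat \<Rightarrow> 'w) \<Rightarrow> nat \<Rightarrow> ('w \<Rightarrow> 'a::field ^'n^'n) \<Rightarrow> bool" where
  "reflection_rep W s k \<rho> \<longleftrightarrow> is_rep W \<rho> \<and> (\<forall>i\<in>{1..k}. is_reflection (\<rho> (s i)))"

definition lin_indep_fam :: "nat \<Rightarrow> (nat \<Rightarrow> 'a::field ^'n) \<Rightarrow> bool" where
  "lin_indep_fam d v \<longleftrightarrow> (\<forall>c. (\<Sum>i<d. c i *s v i) = 0 \<longrightarrow> (\<forall>i<d. c i = 0))"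

text \<open>We realise \<And>^d (F^n) inside the d-fold tensor power,
  whose elements are coordinate functions on index lists of length d
  (coordinates at lists of other lengths are 0).\<close>
definition wedge :: "nat \<Rightarrow> (nat \<Rightarrow> 'a::field ^'n::finite) \<Rightarrow> ('n list \<Rightarrow> 'a)" where
  "wedge d v = (\<lambda>xs. if length xs = d then
      (\<Sum>p | p permutes {..<d}. of_int (sign p) * (\<Prod>i<d. v (p i) $ (xs ! i))) else 0)"

definition ext_pow :: "nat \<Rightarrow> ('n::finite list \<Rightarrow> 'a::field) set" where
  "ext_pow d = {x. \<exists>m (c :: nat \<Rightarrow> 'a) (vs :: nat \<Rightarrow> nat \<Rightarrow> 'a ^'n).
      x = (\<lambda>xs. \<Sum>r<m. c r * wedge d (vs r) xs)}"

text \<open>Diagonal action of a matrix on the d-fold tensor power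
  (restricting to the exterior power, it maps v_1\<and>...\<and>v_d to A v_1 \<and> ... \<and> A v_d).\<close>
definition tensor_act :: "nat \<Rightarrow> 'a::field ^'n::finite^'n \<Rightarrow> ('n list \<Rightarrow> 'a) \<Rightarrow> ('n list \<Rightarrow> 'a)" where
  "tensor_act d A x = (\<lambda>ys. if length ys = d then
      (\<Sum>xs\<in>{xs. length xs = d}. (\<Prod>i<d. A $ (ys ! i) $ (xs ! i)) * x xs) else 0)"

definition ext_iso ::
  "('w, 'b) monoid_scheme \<Rightarrow> nat \<Rightarrow> ('w \<Rightarrow> 'a::field ^'n^'n) \<Rightarrow> ('w \<Rightarrow> 'a ^'n^'n)
     \<Rightarrow> (('n list \<Rightarrow> 'a) \<Rightarrow> ('n list \<Rightarrow> 'a)) \<Rightarrow> bool" where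
  "ext_iso W d \<rho>1 \<rho>2 \<psi> \<longleftrightarrow>
     bij_betw \<psi> (ext_pow d) (ext_pow d) \<and>
     (\<forall>x\<in>ext_pow d. \<forall>y\<in>ext_pow d. \<psi> (\<lambda>xs. x xs + y xs) = (\<lambda>xs. \<psi> x xs + \<psi> y xs)) \<and>
     (\<forall>c. \<forall>x\<in>ext_pow d. \<psi> (\<lambda>xs. c * x xs) = (\<lambda>xs. c * \<psi> x xs)) \<and>
     (\<forall>g\<in>carrier W. \<forall>x\<in>ext_pow d.
        \<psi> (tensor_act d (\<rho>1 g) x) = tensor_act d (\<rho>2 g) (\<psi> x))"

end

theory Submission
  imports Defs
begin

definition dotv :: "'a::field^'n \<Rightarrow> 'a^'n \<Rightarrow> 'a" where
  "dotv g v = (\<Sum>x\<in>UNIV. g$x * v$x)"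

definition fam_indep :: "nat set \<Rightarrow> (nat \<Rightarrow> 'a::field^'n) \<Rightarrow> bool" where
  "fam_indep I v \<longleftrightarrow> (\<forall>c. (\<Sum>l\<in>I. c l *s v l) = 0 \<longrightarrow> (\<forall>l\<in>I. c l = 0))"

lemma fam_indep_inj:
  assumes "fam_indep I v" "finite I" shows "inj_on v I"
proof (rule inj_onI, rule ccontr)
  fix x y assume xy: "x \<in> I" "y \<in> I" "v x = v y" "x \<noteq> y"
  define c where "c = (\<lambda>l. if l = x then (1::'a) else if l = y then -1 else 0)"
  have "(\<Sum>l\<in>I. c l *s v l) = (\<Sum>l\<in>{x,y}. c l *s v l)"
    by (rule sum.mono_neutral_right) (use assms xy in \<open>auto simp: c_def\<close>)
  also have "\<dots> = 0" using xy by (simp add: c_def)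
  finally have "c x = 0" using assms(1) xy unfolding fam_indep_def by blast
  then show False by (simp add: c_def)
qed

lemma fam_indep_set:
  assumes "fam_indep I v" "finite I" shows "vec.independent (v ` I)"
proof -
  have inj: "inj_on v I" by (rule fam_indep_inj[OF assms])
  show ?thesis unfolding vec.independent_explicit
  proof (intro conjI allI impI ballI)
    show "finite (v ` I)" using assms by simp
    fix c w assume s: "(\<Sum>w\<in>v ` I. c w *s w) = 0" and w: "w \<in> v ` I"
    have "(\<Sum>l\<in>I. (c \<circ> v) l *s v l) = 0" using s by (simp add: sum.reindex[OF inj])
    then have "\<forall>l\<in>I. (c \<circ> v) l = 0" using assms(1) unfolding fam_indep_def by blast
    then show "c w = 0" using w by auto
  qed
qed

lemma set_fam_indep:
  assumes "inj_on v I" "vec.independent (v ` I)" shows "fam_indep I v"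
  unfolding fam_indep_def
proof (intro allI impI ballI)
  fix c l assume s: "(\<Sum>l\<in>I. c l *s v l) = 0" and l: "l \<in> I"
  define c' where "c' w = c (the_inv_into I v w)" for w
  have "(\<Sum>w\<in>v ` I. c' w *s w) = (\<Sum>l\<in>I. c' (v l) *s v l)" by (simp add: sum.reindex[OF assms(1)])
  also have "\<dots> = (\<Sum>l\<in>I. c l *s v l)"
    by (rule sum.cong) (simp_all add: c'_def the_inv_into_f_f[OF assms(1)])
  finally have "(\<Sum>w\<in>v ` I. c' w *s w) = 0" using s by simp
  then have "c' (v l) = 0" using assms(2) l unfolding vec.independent_explicit by blast
  then show "c l = 0" by (simp add: c'_def the_inv_into_f_f[OF assms(1) l])
qed

lemma dual_exists:
  fixes v :: "nat \<Rightarrow> 'a::field^'n"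
  assumes "fam_indep I v" "finite I" "l \<in> I"
  shows "\<exists>g. \<forall>l'\<in>I. dotv g (v l') = (if l' = l then 1 else 0)"
proof -
  have inj: "inj_on v I" by (rule fam_indep_inj[OF assms(1,2)])
  have ind: "vec.independent (v ` I)" by (rule fam_indep_set[OF assms(1,2)])
  obtain B where B: "v ` I \<subseteq> B" "vec.independent B" "UNIV \<subseteq> vec.span B"
    by (rule vec.maximal_independent_subset_extend[OF subset_UNIV ind])
  have sp: "x \<in> vec.span B" for x using B(3) by blast
  define g :: "'a^'n" where "g = (\<chi> x. vec.representation B (axis x 1) (v l))"
  have rep: "dotv g u = vec.representation B u (v l)" for u
  proof -
    have "vec.representation B u = vec.representation B (\<Sum>x\<in>UNIV. u$x *s axis x 1)"
      by (simp only: basis_expansion)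
    also have "\<dots> = (\<lambda>b. \<Sum>x\<in>UNIV. vec.representation B (u$x *s axis x 1) b)"
      by (rule vec.representation_sum[OF B(2)]) (rule sp)
    also have "\<dots> = (\<lambda>b. \<Sum>x\<in>UNIV. u$x * vec.representation B (axis x 1) b)"
      by (simp only: vec.representation_scale[OF B(2) sp])
    finally have "vec.representation B u (v l) = (\<Sum>x\<in>UNIV. u$x * vec.representation B (axis x 1) (v l))"
      by simp
    then show ?thesis unfolding dotv_def g_def by (simp add: mult.commute)
  qed
  show ?thesis
  proof (intro exI ballI)
    fix l' assume l': "l' \<in> I"
    have "vec.representation B (v l') = (\<lambda>w. if w = v l' then 1 else 0)"
      using B(1) l' by (intro vec.representation_basis[OF B(2)]) auto
    then have "dotv g (v l') = (if v l = v l' then 1 else 0)" by (simp add: rep)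
    moreover have "v l = v l' \<longleftrightarrow> l' = l" using inj l' assms(3) by (auto simp: inj_on_def)
    ultimately show "dotv g (v l') = (if l' = l then 1 else 0)" by simp
  qed
qed

lemma lists_Suc_eq:
  "{xs::'n list. length xs = Suc d} = (\<lambda>(x,ys). x # ys) ` (UNIV \<times> {ys. length ys = d})"
  by (auto simp: length_Suc_conv image_iff)

lemma sum_lists_prod:
  fixes f :: "nat \<Rightarrow> 'n::finite \<Rightarrow> 'a::comm_semiring_1"
  shows "(\<Sum>xs\<in>{xs::'n list. length xs = d}. \<Prod>i<d. f i (xs!i)) = (\<Prod>i<d. \<Sum>x\<in>UNIV. f i x)"
proof (induction d arbitrary: f)
  case 0
  have "{xs::'n list. length xs = 0} = {[]}" by auto
  then show ?case by simp
next
  case (Suc d)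
  have inj: "inj_on (\<lambda>(x::'n,ys). x # ys) (UNIV \<times> {ys. length ys = d})"
    by (auto simp: inj_on_def)
  have "(\<Sum>xs\<in>{xs::'n list. length xs = Suc d}. \<Prod>i<Suc d. f i (xs!i))
      = (\<Sum>(x,ys)\<in>UNIV \<times> {ys::'n list. length ys = d}. \<Prod>i<Suc d. f i ((x#ys)!i))"
    unfolding lists_Suc_eq sum.reindex[OF inj] by (simp add: comp_def case_prod_beta)
  also have "\<dots> = (\<Sum>x\<in>UNIV. \<Sum>ys\<in>{ys::'n list. length ys = d}. f 0 x * (\<Prod>i<d. f (Suc i) (ys!i)))"
    by (simp add: sum.cartesian_product[symmetric] prod.lessThan_Suc_shift del: prod.lessThan_Suc)
  also have "\<dots> = (\<Sum>x\<in>UNIV. f 0 x) * (\<Prod>i<d. \<Sum>y\<in>UNIV. f (Suc i) y)"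
    using Suc[of "\<lambda>i. f (Suc i)"] by (simp add: sum_distrib_left[symmetric] sum_distrib_right)
  also have "\<dots> = (\<Prod>i<Suc d. \<Sum>x\<in>UNIV. f i x)"
    by (simp add: prod.lessThan_Suc_shift del: prod.lessThan_Suc)
  finally show ?case .
qed

definition pairing :: "nat \<Rightarrow> (nat \<Rightarrow> 'a::field^'n::finite) \<Rightarrow> ('n list \<Rightarrow> 'a) \<Rightarrow> 'a" where
  "pairing d G T = (\<Sum>xs\<in>{xs. length xs = d}. (\<Prod>i<d. G i $ (xs!i)) * T xs)"

definition detp :: "nat \<Rightarrow> (nat \<Rightarrow> nat \<Rightarrow> 'a::comm_ring_1) \<Rightarrow> 'a" where
  "detp d M = (\<Sum>p | p permutes {..<d}. of_int (sign p) * (\<Prod>i<d. M i (p i)))"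

lemma pairing_wedge:
  "pairing d G (wedge d v) = detp d (\<lambda>i m. dotv (G i) (v m))"
proof -
  have "pairing d G (wedge d v) = (\<Sum>xs\<in>{xs. length xs = d}. \<Sum>p | p permutes {..<d}.
          of_int (sign p) * (\<Prod>i<d. G i $ (xs!i) * v (p i) $ (xs!i)))"
    unfolding pairing_def wedge_def
    by (intro sum.cong refl) (simp add: sum_distrib_left prod.distrib mult_ac)
  also have "\<dots> = (\<Sum>p | p permutes {..<d}. of_int (sign p) *
          (\<Sum>xs\<in>{xs. length xs = d}. \<Prod>i<d. G i $ (xs!i) * v (p i) $ (xs!i)))"
    by (subst sum.swap) (simp add: sum_distrib_left)
  also have "\<dots> = detp d (\<lambda>i m. dotv (G i) (v m))"
    unfolding detp_def dotv_def
  proof (rule sum.cong[OF refl])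
    fix p
    show "of_int (sign p) * (\<Sum>xs\<in>{xs. length xs = d}. \<Prod>i<d. G i $ (xs!i) * v (p i) $ (xs!i))
        = of_int (sign p) * (\<Prod>i<d. \<Sum>x\<in>UNIV. G i $ x * v (p i) $ x)"
      using sum_lists_prod[of "\<lambda>i x. G i $ x * v (p i) $ x" d] by simp
  qed
  finally show ?thesis .
qed

lemma pairing_lin:
  assumes "finite F"
  shows "pairing d G (\<lambda>xs. \<Sum>l\<in>F. c l * T l xs) = (\<Sum>l\<in>F. c l * pairing d G (T l))"
  unfolding pairing_def
  by (simp add: sum_distrib_left sum_distrib_right mult_ac sum.swap[of _ F])

lemma pairing_scale: "pairing d G (\<lambda>xs. c * T xs) = c * pairing d G T"
  unfolding pairing_def by (simp add: sum_distrib_left mult_ac)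

lemma pairing_zero: "pairing d G (\<lambda>xs. 0) = 0"
  unfolding pairing_def by simp

lemma perm_le_id:
  assumes p: "p permutes {..<d::nat}" and le: "\<forall>i<d. p i \<le> i"
  shows "p = id"
proof -
  have s: "(\<Sum>i<d. p i) = (\<Sum>i<d. i)"
  proof -
    have "(\<Sum>i<d. i) = sum id (p ` {..<d})" by (simp add: permutes_image[OF p])
    also have "\<dots> = (\<Sum>i<d. p i)" by (simp add: sum.reindex[OF permutes_inj_on[OF p]])
    finally show ?thesis by simp
  qed
  have "\<forall>i<d. p i = i"
  proof (rule ccontr)
    assume "\<not> (\<forall>i<d. p i = i)"
    then obtain i where i: "i < d" "p i < i" using le le_neq_implies_less by blast
    have "(\<Sum>i<d. p i) < (\<Sum>i<d. i)"
      by (rule sum_strict_mono_ex1) (use le i in auto)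
    then show False using s by simp
  qed
  then show ?thesis using permutes_not_in[OF p] by (auto simp: fun_eq_iff)
qed

lemma detp_lower:
  fixes M :: "nat \<Rightarrow> nat \<Rightarrow> 'a::comm_ring_1"
  assumes "\<forall>i m. i < d \<longrightarrow> m < d \<longrightarrow> i < m \<longrightarrow> M i m = 0"
  shows "detp d M = (\<Prod>i<d. M i i)"
proof -
  let ?P = "{p. p permutes {..<d}}"
  have z: "of_int (sign p) * (\<Prod>i<d. M i (p i)) = 0" if "p \<in> ?P - {id}" for p
  proof -
    have p: "p permutes {..<d}" "p \<noteq> id" using that by auto
    then obtain i where i: "i < d" "\<not> p i \<le> i" using perm_le_id by blast
    have "p i < d" using p(1) i(1) permutes_in_image by fastforce
    then have "M i (p i) = 0" using assms i by auto
    then have "(\<Prod>i<d. M i (p i)) = 0" using i(1) by (intro prod_zero) auto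
    then show ?thesis by simp
  qed
  have "detp d M = (\<Sum>p\<in>?P. of_int (sign p) * (\<Prod>i<d. M i (p i)))" by (simp add: detp_def)
  also have "\<dots> = of_int (sign (id::nat\<Rightarrow>nat)) * (\<Prod>i<d. M i (id i))"
  proof -
    have fin: "finite ?P" by (simp add: finite_permutations)
    have idP: "id \<in> ?P" by (simp add: permutes_id)
    have "(\<Sum>p\<in>?P. of_int (sign p) * (\<Prod>i<d. M i (p i))) = of_int (sign (id::nat\<Rightarrow>nat)) * (\<Prod>i<d. M i (id i))
         + (\<Sum>p\<in>?P - {id}. of_int (sign p) * (\<Prod>i<d. M i (p i)))"
      by (rule sum.remove[OF fin idP])
    also have "(\<Sum>p\<in>?P - {id}. of_int (sign p) * (\<Prod>i<d. M i (p i))) = 0"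
      by (rule sum.neutral) (use z in blast)
    finally show ?thesis by simp
  qed
  finally show ?thesis by simp
qed

lemma wedge_slot0_form:
  assumes d: "1 \<le> d" and len: "length xs = d"
  shows "\<exists>R y. \<forall>z. wedge d (v(0 := z)) xs = (\<Sum>p | p permutes {..<d}. z $ (y p) * R p)"
proof -
  define y where "y p = xs ! (Hilbert_Choice.inv p 0)" for p :: "nat \<Rightarrow> nat"
  define R where "R p = of_int (sign p) * (\<Prod>i\<in>{..<d} - {Hilbert_Choice.inv p 0}. v (p i) $ (xs ! i))" for p
  have eq: "of_int (sign p) * (\<Prod>i<d. (v(0 := z)) (p i) $ (xs ! i)) = z $ y p * R p"
    if p: "p permutes {..<d}" for p z
  proof -
    have i0: "Hilbert_Choice.inv p 0 < d" using permutes_in_image[OF permutes_inv[OF p]] d by auto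
    have p0: "p (Hilbert_Choice.inv p 0) = 0" by (rule permutes_inverses(1)[OF p])
    have ne: "p i \<noteq> 0" if "i \<noteq> Hilbert_Choice.inv p 0" for i
      using that p0 permutes_inj[OF p] by (metis injD)
    have "(\<Prod>i<d. (v(0 := z)) (p i) $ (xs ! i)) = (v(0 := z)) (p (Hilbert_Choice.inv p 0)) $ (xs ! Hilbert_Choice.inv p 0) *
          (\<Prod>i\<in>{..<d} - {Hilbert_Choice.inv p 0}. (v(0 := z)) (p i) $ (xs ! i))"
      by (rule prod.remove) (use i0 in auto)
    also have "\<dots> = z $ y p * (\<Prod>i\<in>{..<d} - {Hilbert_Choice.inv p 0}. v (p i) $ (xs ! i))"
    proof -
      have "(\<Prod>i\<in>{..<d} - {Hilbert_Choice.inv p 0}. (v(0 := z)) (p i) $ (xs ! i))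
          = (\<Prod>i\<in>{..<d} - {Hilbert_Choice.inv p 0}. v (p i) $ (xs ! i))"
        by (intro prod.cong refl) (metis DiffE fun_upd_other insertI1 ne)
      then show ?thesis using p0 by (simp add: y_def)
    qed
    finally show ?thesis
      by (simp add: R_def mult_ac)
  qed
  have "wedge d (v(0 := z)) xs = (\<Sum>p | p permutes {..<d}. z $ (y p) * R p)" for z
  proof -
    have "wedge d (v(0 := z)) xs = (\<Sum>p | p permutes {..<d}. of_int (sign p) * (\<Prod>i<d. (v(0 := z)) (p i) $ (xs ! i)))"
      unfolding wedge_def using len by (simp del: fun_upd_apply)
    also have "\<dots> = (\<Sum>p | p permutes {..<d}. z $ (y p) * R p)"
      by (rule sum.cong[OF refl], rule eq, simp)
    finally show ?thesis .
  qed
  then show ?thesis by blast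
qed

lemma wedge_slot0:
  assumes d: "1 \<le> d" and F: "finite F"
  shows "wedge d (v(0 := (\<Sum>l\<in>F. c l *s u l))) xs = (\<Sum>l\<in>F. c l * wedge d (v(0 := u l)) xs)"
proof (cases "length xs = d")
  case True
  obtain R y where R: "\<And>z. wedge d (v(0 := z)) xs = (\<Sum>p | p permutes {..<d}. z $ (y p) * R p)"
    using wedge_slot0_form[OF d True] by blast
  show ?thesis unfolding R
    by (simp add: sum_distrib_left sum_distrib_right mult_ac sum.swap[of _ F])
next
  case False
  then show ?thesis by (simp add: wedge_def)
qed

lemma self_neg_zero:
  fixes x :: "'a::field_char_0"
  assumes "x = - x" shows "x = 0"
proof -
  have "2 * x = x + x" by (rule mult_2)
  also have "\<dots> = x + - x" using arg_cong[OF assms, of "\<lambda>y. x + y"] .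
  also have "\<dots> = 0" by simp
  finally show ?thesis by simp
qed

lemma wedge_rep:
  fixes v :: "nat \<Rightarrow> 'a::field_char_0^'n::finite"
  assumes eq: "v 0 = v m" and m: "0 < m" "m < d"
  shows "wedge d v = (\<lambda>xs. 0)"
proof
  fix xs :: "'n list"
  let ?P = "{p. p permutes {..<d}}"
  let ?f = "\<lambda>p. of_int (sign p) * (\<Prod>i<d. v (p i) $ (xs ! i)) :: 'a"
  define \<tau> where "\<tau> = Transposition.transpose (0::nat) m"
  have tau: "\<tau> permutes {..<d}" unfolding \<tau>_def using m by (intro permutes_swap_id) auto
  have vt: "v (\<tau> x) = v x" for x
  proof -
    have "\<tau> x = 0 \<and> x = m \<or> \<tau> x = m \<and> x = 0 \<or> \<tau> x = x"
      unfolding \<tau>_def Transposition.transpose_def by auto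
    then show ?thesis using eq by metis
  qed
  have "sum ?f ?P = sum (\<lambda>p. ?f (\<tau> \<circ> p)) ?P"
    by (rule setum_permutations_compose_left[OF tau])
  also have "\<dots> = sum (\<lambda>p. - ?f p) ?P"
  proof (rule sum.cong[OF refl])
    fix p assume "p \<in> ?P"
    then have p: "p permutes {..<d}" by simp
    have "sign (\<tau> \<circ> p) = sign \<tau> * sign p"
      by (rule sign_compose) (use tau p in \<open>auto simp: permutation_permutes\<close>)
    moreover have "sign \<tau> = -1" unfolding \<tau>_def using m by (simp add: sign_swap_id)
    ultimately show "?f (\<tau> \<circ> p) = - ?f p" by (simp add: vt)
  qed
  also have "\<dots> = - sum ?f ?P" by (simp add: sum_negf)
  finally have "sum ?f ?P = - sum ?f ?P" .
  then have "sum ?f ?P = 0" by (rule self_neg_zero)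
  then show "wedge d v xs = 0" by (simp add: wedge_def)
qed

lemma lin_indep_sub:
  assumes ind: "fam_indep I v" and inj: "inj_on l {..<d}" and sub: "l ` {..<d} \<subseteq> I" and fin: "finite I"
  shows "lin_indep_fam d (v \<circ> l)"
  unfolding lin_indep_fam_def
proof (rule allI, rule impI)
  fix c assume s: "(\<Sum>i<d. c i *s (v \<circ> l) i) = 0"
  define c' where "c' y = (if y \<in> l ` {..<d} then c (the_inv_into {..<d} l y) else 0)" for y
  have "(\<Sum>y\<in>I. c' y *s v y) = (\<Sum>y\<in>l ` {..<d}. c' y *s v y)"
    by (rule sum.mono_neutral_right) (use fin sub in \<open>auto simp: c'_def\<close>)
  also have "\<dots> = (\<Sum>i<d. c' (l i) *s v (l i))" by (simp add: sum.reindex[OF inj])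
  also have "\<dots> = (\<Sum>i<d. c i *s (v \<circ> l) i)"
    by (intro sum.cong refl) (simp add: c'_def the_inv_into_f_f[OF inj])
  finally have "(\<Sum>y\<in>I. c' y *s v y) = 0" using s by simp
  then have z: "\<forall>y\<in>I. c' y = 0" using ind unfolding fam_indep_def by blast
  show "\<forall>i<d. c i = 0"
  proof (intro allI impI)
    fix i assume i: "i < d"
    then have "c' (l i) = 0" using z sub by auto
    then show "c i = 0" using i by (simp add: c'_def the_inv_into_f_f[OF inj])
  qed
qed

lemma idx_inj:
  fixes d :: nat
  assumes "inj_on u {1..<d}" "l \<notin> u ` {1..<d}"
  shows "inj_on (u(0 := l)) {..<d}"
proof (rule inj_onI)
  fix x y assume xy: "x \<in> {..<d}" "y \<in> {..<d}" "(u(0 := l)) x = (u(0 := l)) y"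
  show "x = y"
  proof (cases "x = 0"; cases "y = 0")
    assume "x \<noteq> 0" "y \<noteq> 0"
    then have "x \<in> {1..<d}" "y \<in> {1..<d}" "u x = u y" using xy by auto
    then show ?thesis using assms(1) by (blast dest: inj_onD)
  next
    assume "x = 0" "y \<noteq> 0"
    then show ?thesis using xy assms(2) by auto
  next
    assume "x \<noteq> 0" "y = 0"
    then show ?thesis using xy assms(2) by (metis atLeastLessThan_iff fun_upd_other fun_upd_same image_eqI
        lessThan_iff less_one linorder_not_le)
  qed simp
qed

lemma idx_range:
  fixes d :: nat
  assumes "u ` {1..<d} \<subseteq> I" "l \<in> I"
  shows "(u(0 := l)) ` {..<d} \<subseteq> I"
proof
  fix y assume "y \<in> (u(0 := l)) ` {..<d}"
  then obtain x where x: "x < d" "y = (u(0 := l)) x" by auto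
  show "y \<in> I"
  proof (cases "x = 0")
    case False
    then have "x \<in> {1..<d}" using x by auto
    then show ?thesis using x False assms(1) by auto
  qed (use x assms in auto)
qed

lemma wedge_idx_zero:
  fixes w :: "nat \<Rightarrow> 'a::field_char_0^'n::finite"
  assumes "0 < i" "i < d" "l = u i"
  shows "wedge d (w \<circ> u(0 := l)) = (\<lambda>xs. 0)"
  by (rule wedge_rep[of _ i]) (use assms in auto)

lemma idx_comp: "w \<circ> u(0 := x) = (w \<circ> u)(0 := w x)"
  by (simp add: fun_eq_iff)

lemma wedge_idx_expand:
  assumes "1 \<le> d" "finite I" "w h = (\<Sum>l\<in>I. a l *s w l)"
  shows "wedge d (w \<circ> u(0 := h)) xs = (\<Sum>l\<in>I. a l * wedge d (w \<circ> u(0 := l)) xs)"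
  unfolding idx_comp assms(3) by (rule wedge_slot0[OF assms(1,2)])

lemma wedge_zero_slot:
  assumes "1 \<le> d"
  shows "wedge d (v(0 := 0)) xs = 0"
  using wedge_slot0[OF assms finite.emptyI, of v "\<lambda>_. 0" "\<lambda>_. 0" xs] by simp

lemma detp_basis:
  assumes dual: "\<forall>a\<in>I. \<forall>b\<in>I. dotv (g a) (v b) = (if b = a then 1 else 0)"
    and inj: "inj_on u {1..<d}" and sub: "u ` {1..<d} \<subseteq> I"
    and j: "j \<in> I" "j \<notin> u ` {1..<d}" and l: "l \<in> I" and d: "1 \<le> d"
  shows "detp d (\<lambda>i m. dotv (g ((u(0 := j)) i)) (v ((u(0 := l)) m))) = (if l = j then 1 else 0)"
proof -
  let ?M = "\<lambda>i m. dotv (g ((u(0 := j)) i)) (v ((u(0 := l)) m))"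
  have um: "u m \<in> I" if "1 \<le> m" "m < d" for m using sub that by auto
  have low: "\<forall>i m. i < d \<longrightarrow> m < d \<longrightarrow> i < m \<longrightarrow> ?M i m = 0"
  proof (intro allI impI)
    fix i m assume im: "i < d" "m < d" "i < m"
    then have m1: "m \<noteq> 0" by auto
    show "?M i m = 0"
    proof (cases "i = 0")
      case True
      have "u m \<noteq> j" using j(2) m1 im by auto
      then show ?thesis using True m1 dual j(1) um[of m] im by auto
    next
      case False
      have "i \<in> {1..<d}" "m \<in> {1..<d}" using False im by auto
      then have "u m \<noteq> u i" using inj im by (metis inj_onD less_irrefl)
      then show ?thesis using False m1 dual um[of m] um[of i] im by auto
    qed
  qed
  have "detp d ?M = (\<Prod>i<d. ?M i i)" by (rule detp_lower[OF low])
  also have "\<dots> = (\<Prod>i<d. if i = 0 then ?M 0 0 else 1)"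
  proof (rule prod.cong[OF refl])
    fix i assume "i \<in> {..<d}"
    then show "?M i i = (if i = 0 then ?M 0 0 else 1)" using dual um[of i] by auto
  qed
  also have "\<dots> = ?M 0 0" using d by (simp add: prod.delta)
  also have "\<dots> = (if l = j then 1 else 0)" using dual j(1) l by simp
  finally show ?thesis .
qed

lemma wedge_in_E: "wedge d v \<in> ext_pow d"
  unfolding ext_pow_def
  by (rule CollectI, rule exI[of _ 1], rule exI[of _ "\<lambda>_. 1"], rule exI[of _ "\<lambda>_. v"]) simp

lemma zero_in_E: "(\<lambda>xs. 0) \<in> ext_pow d"
  unfolding ext_pow_def by (rule CollectI, rule exI[of _ 0]) simp

lemma step_in_E:
  assumes "x \<in> ext_pow d"
  shows "(\<lambda>xs. c * wedge d v xs + x xs) \<in> ext_pow d"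
proof -
  obtain m :: nat and cc vs where x: "x = (\<lambda>xs. \<Sum>r<m. cc r * wedge d (vs r) xs)"
    using assms unfolding ext_pow_def mem_Collect_eq by (elim exE) (rule that)
  have "(\<lambda>xs. c * wedge d v xs + x xs) = (\<lambda>xs. \<Sum>r<Suc m. (cc(m := c)) r * wedge d ((vs(m := v)) r) xs)"
  proof
    fix xs
    have "(\<Sum>r<m. (cc(m := c)) r * wedge d ((vs(m := v)) r) xs) = (\<Sum>r<m. cc r * wedge d (vs r) xs)"
      by (rule sum.cong) auto
    then show "c * wedge d v xs + x xs = (\<Sum>r<Suc m. (cc(m := c)) r * wedge d ((vs(m := v)) r) xs)"
      by (simp add: x)
  qed
  then show ?thesis unfolding ext_pow_def by blast
qed

lemma scale_in_E:
  assumes "x \<in> ext_pow d"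
  shows "(\<lambda>xs. c * x xs) \<in> ext_pow d"
proof -
  obtain m :: nat and cc vs where x: "x = (\<lambda>xs. \<Sum>r<m. cc r * wedge d (vs r) xs)"
    using assms unfolding ext_pow_def mem_Collect_eq by (elim exE) (rule that)
  have "(\<lambda>xs. c * x xs) = (\<lambda>xs. \<Sum>r<m. (c * cc r) * wedge d (vs r) xs)"
    by (simp add: x sum_distrib_left mult.assoc)
  then show ?thesis unfolding ext_pow_def
    by (intro CollectI exI[of _ m] exI[of _ "\<lambda>r. c * cc r"] exI[of _ vs]) simp
qed

lemma sum_in_E:
  assumes "finite F"
  shows "(\<lambda>xs. \<Sum>l\<in>F. c l * wedge d (V l) xs) \<in> ext_pow d"
  using assms
proof (induction F rule: finite_induct)
  case empty
  then show ?case using zero_in_E by simp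
next
  case (insert a F)
  then show ?case using step_in_E[OF insert.IH, of "c a" "V a"] by simp
qed

lemma psi_zero:
  assumes "ext_iso W d \<rho>1 \<rho>2 \<psi>"
  shows "\<psi> (\<lambda>xs. 0) = (\<lambda>xs. 0)"
proof -
  have "\<forall>c. \<forall>x\<in>ext_pow d. \<psi> (\<lambda>xs. c * x xs) = (\<lambda>xs. c * \<psi> x xs)"
    using assms unfolding ext_iso_def by blast
  then have "\<psi> (\<lambda>xs. 0 * (\<lambda>xs. 0) xs) = (\<lambda>xs. 0 * \<psi> (\<lambda>xs. 0) xs)"
    using zero_in_E[of d] by (rule bspec[OF spec[of _ 0]])
  then show ?thesis by simp
qed

lemma psi_sum:
  assumes iso: "ext_iso W d \<rho>1 \<rho>2 \<psi>" and fin: "finite F"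
  shows "\<psi> (\<lambda>xs. \<Sum>l\<in>F. c l * wedge d (V l) xs) = (\<lambda>xs. \<Sum>l\<in>F. c l * \<psi> (wedge d (V l)) xs)"
  using fin
proof (induction F rule: finite_induct)
  case empty
  then show ?case using psi_zero[OF iso] by simp
next
  case (insert a F)
  have add: "\<forall>x\<in>ext_pow d. \<forall>y\<in>ext_pow d. \<psi> (\<lambda>xs. x xs + y xs) = (\<lambda>xs. \<psi> x xs + \<psi> y xs)"
    and sc: "\<forall>c. \<forall>x\<in>ext_pow d. \<psi> (\<lambda>xs. c * x xs) = (\<lambda>xs. c * \<psi> x xs)"
    using iso unfolding ext_iso_def by blast+
  let ?A = "\<lambda>xs. c a * wedge d (V a) xs"
  let ?S = "\<lambda>xs. \<Sum>l\<in>F. c l * wedge d (V l) xs"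
  have A: "?A \<in> ext_pow d" using scale_in_E[OF wedge_in_E] .
  have S: "?S \<in> ext_pow d" using sum_in_E[OF insert.hyps(1)] .
  have eq: "(\<lambda>xs. \<Sum>l\<in>insert a F. c l * wedge d (V l) xs) = (\<lambda>xs. ?A xs + ?S xs)"
    using insert.hyps by simp
  have e1: "\<psi> (\<lambda>xs. \<Sum>l\<in>insert a F. c l * wedge d (V l) xs) = (\<lambda>xs. \<psi> ?A xs + \<psi> ?S xs)"
    unfolding eq by (rule add[rule_format, OF A S])
  have e2: "\<psi> ?A = (\<lambda>xs. c a * \<psi> (wedge d (V a)) xs)"
    by (rule sc[rule_format, OF wedge_in_E])
  show ?case unfolding e1 e2 insert.IH using insert.hyps by simp
qed

lemma pairing_idx:
  assumes dual: "\<forall>a\<in>I. \<forall>b\<in>I. dotv (g a) (v b) = (if b = a then 1 else 0)"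
    and inj: "inj_on u {1..<d}" and sub: "u ` {1..<d} \<subseteq> I"
    and j: "j \<in> I" "j \<notin> u ` {1..<d}" and l: "l \<in> I" and d: "1 \<le> d"
  shows "pairing d (\<lambda>i. g ((u(0 := j)) i)) (wedge d (v \<circ> u(0 := l))) = (if l = j then 1 else 0)"
  unfolding pairing_wedge comp_def by (rule detp_basis[OF assms])

lemma sum_if_eq:
  fixes f :: "nat \<Rightarrow> 'a::field"
  assumes "finite L" "j \<in> L"
  shows "(\<Sum>l\<in>L. f l * (if l = j then 1 else 0)) = f j"
proof -
  have "(\<Sum>l\<in>L. f l * (if l = j then 1 else 0)) = (\<Sum>l\<in>L. if l = j then f l else 0)"
    by (rule sum.cong) auto
  also have "\<dots> = f j" using assms by (simp add: sum.delta sum.delta')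
  finally show ?thesis .
qed

theorem lemma5p17:
  fixes W :: "('w, 'b) monoid_scheme"
    and s :: "nat \<Rightarrow> 'w" and k :: nat
    and \<rho>1 \<rho>2 :: "'w \<Rightarrow> 'a::field_char_0 ^'n^'n"
    and \<alpha> \<beta> :: "nat \<Rightarrow> 'a ^'n"
    and d :: nat
    and \<psi> :: "('n list \<Rightarrow> 'a) \<Rightarrow> ('n list \<Rightarrow> 'a)"
    and I :: "nat set" and h j :: nat
    and a b :: "nat \<Rightarrow> 'a"
    and t :: "nat \<Rightarrow> nat"
  assumes grp: "group W"
    and S_gen: "s ` {1..k} \<subseteq> carrier W" "generate W (s ` {1..k}) = carrier W"
    and rep1: "reflection_rep W s k \<rho>1" and irr1: "irreducible_rep W \<rho>1"
    and rep2: "reflection_rep W s k \<rho>2" and irr2: "irreducible_rep W \<rho>2"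
    and alpha: "\<forall>i\<in>{1..k}. reflection_vector (\<rho>1 (s i)) (\<alpha> i)"
    and beta: "\<forall>i\<in>{1..k}. reflection_vector (\<rho>2 (s i)) (\<beta> i)"
    and d_bounds: "1 \<le> d" "d \<le> CARD('n) - 1"
    and psi_iso: "ext_iso W d \<rho>1 \<rho>2 \<psi>"
    and psi_wedge: "\<forall>l::nat \<Rightarrow> nat. l ` {..<d} \<subseteq> {1..k} \<and> lin_indep_fam d (\<alpha> \<circ> l) \<longrightarrow>
         lin_indep_fam d (\<beta> \<circ> l) \<and>
         (\<exists>\<zeta>. \<zeta> \<noteq> 0 \<and> \<psi> (wedge d (\<alpha> \<circ> l)) = (\<lambda>xs. \<zeta> * wedge d (\<beta> \<circ> l) xs))"
    and I_sub: "I \<subseteq> {1..k}"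
    and I_basis: "inj_on \<alpha> I" "vec.independent (\<alpha> ` I)" "vec.span (\<alpha> ` I) = UNIV"
    and h_in: "h \<in> {1..k} - I" and j_in: "j \<in> I"
    and a_coeffs: "\<alpha> h = (\<Sum>l\<in>I. a l *s \<alpha> l)"
    and b_coeffs: "\<beta> h = (\<Sum>l\<in>I. b l *s \<beta> l)"
    and aj: "a j \<noteq> 0"
    and t_distinct: "inj_on t {1..<d}" and t_range: "t ` {1..<d} \<subseteq> I - {j}"
  shows "\<forall>\<zeta>1 \<zeta>2.
           \<psi> (wedge d (\<alpha> \<circ> t(0 := j))) = (\<lambda>xs. \<zeta>1 * wedge d (\<beta> \<circ> t(0 := j)) xs) \<and>
           \<psi> (wedge d (\<alpha> \<circ> t(0 := h))) = (\<lambda>xs. \<zeta>2 * wedge d (\<beta> \<circ> t(0 := h)) xs)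
           \<longrightarrow> \<zeta>1 * a j = \<zeta>2 * b j"
proof -
  have finI: "finite I" using I_sub finite_subset by blast
  have famA: "fam_indep I \<alpha>" by (rule set_fam_indep[OF I_basis(1,2)])
  have d1: "1 \<le> d" using d_bounds(1) .
  have injpsi: "inj_on \<psi> (ext_pow d)" using psi_iso unfolding ext_iso_def bij_betw_def by blast
  have "card (\<alpha> ` I) = vec.dim (UNIV :: ('a^'n) set)"
    by (rule vec.basis_card_eq_dim) (use I_basis in auto)
  then have cardI: "card I = CARD('n)" using card_image[OF I_basis(1)] vec_dim_card by simp
  have cpos: "0 < CARD('n)" by simp
  have dn: "d < card I" using d_bounds cardI cpos by linarith
  have Isub: "l \<in> {1..k}" if "l \<in> I" for l using I_sub that by blast
  have dualA: "\<exists>g. \<forall>a\<in>I. \<forall>b\<in>I. dotv (g a) (\<alpha> b) = (if b = a then 1 else 0)"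
  proof -
    have "\<forall>a\<in>I. \<exists>ga. \<forall>b\<in>I. dotv ga (\<alpha> b) = (if b = a then 1 else 0)"
      using dual_exists[OF famA finI] by blast
    from bchoice[OF this] show ?thesis by blast
  qed
  then obtain ga where ga: "\<forall>a\<in>I. \<forall>b\<in>I. dotv (ga a) (\<alpha> b) = (if b = a then 1 else 0)" by blast
  have famB: "fam_indep I \<beta>"
  proof (rule ccontr)
    assume "\<not> fam_indep I \<beta>"
    then obtain c m where c: "(\<Sum>l\<in>I. c l *s \<beta> l) = 0" and m: "m \<in> I" "c m \<noteq> 0"
      unfolding fam_indep_def by blast
    have "card {1..<d} \<le> card (I - {m})" using dn m finI by (simp add: card_Diff_singleton)
    then obtain u where u0: "u ` {1..<d} \<subseteq> I - {m}" "inj_on u {1..<d}"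
      using card_le_inj[of "{1..<d}" "I - {m}"] finI by auto
    have usub: "u ` {1..<d} \<subseteq> I" using u0(1) by blast
    have mU: "m \<notin> u ` {1..<d}" using u0(1) by blast
    define L where "L = I - u ` {1..<d}"
    have finL: "finite L" using finI by (simp add: L_def)
    have mL: "m \<in> L" using m mU by (simp add: L_def)
    have ex: "\<exists>\<zeta>. \<zeta> \<noteq> 0 \<and> \<psi> (wedge d (\<alpha> \<circ> u(0 := l))) = (\<lambda>xs. \<zeta> * wedge d (\<beta> \<circ> u(0 := l)) xs)"
      if l: "l \<in> L" for l
    proof -
      have lI: "l \<in> I" "l \<notin> u ` {1..<d}" using l by (auto simp: L_def)
      have r: "(u(0 := l)) ` {..<d} \<subseteq> I" by (rule idx_range[OF usub lI(1)])
      have "lin_indep_fam d (\<alpha> \<circ> u(0 := l))"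
        by (rule lin_indep_sub[OF famA idx_inj[OF u0(2) lI(2)] r finI])
      moreover have "(u(0 := l)) ` {..<d} \<subseteq> {1..k}" using r I_sub by blast
      ultimately show ?thesis using psi_wedge by blast
    qed
    have "\<forall>l\<in>L. \<exists>\<zeta>. \<zeta> \<noteq> 0 \<and> \<psi> (wedge d (\<alpha> \<circ> u(0 := l))) = (\<lambda>xs. \<zeta> * wedge d (\<beta> \<circ> u(0 := l)) xs)"
      using ex by blast
    from bchoice[OF this] obtain Z where Z: "\<forall>l\<in>L. Z l \<noteq> 0 \<and>
        \<psi> (wedge d (\<alpha> \<circ> u(0 := l))) = (\<lambda>xs. Z l * wedge d (\<beta> \<circ> u(0 := l)) xs)" by blast
    define y where "y = (\<lambda>xs. \<Sum>l\<in>L. (c l / Z l) * wedge d (\<alpha> \<circ> u(0 := l)) xs)"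
    have yE: "y \<in> ext_pow d" unfolding y_def by (rule sum_in_E[OF finL])
    have "\<psi> y = (\<lambda>xs. \<Sum>l\<in>L. (c l / Z l) * \<psi> (wedge d (\<alpha> \<circ> u(0 := l))) xs)"
      unfolding y_def by (rule psi_sum[OF psi_iso finL])
    also have "\<dots> = (\<lambda>xs. \<Sum>l\<in>L. c l * wedge d (\<beta> \<circ> u(0 := l)) xs)"
    proof (rule ext, rule sum.cong[OF refl])
      fix xs l assume "l \<in> L"
      then show "c l / Z l * \<psi> (wedge d (\<alpha> \<circ> u(0 := l))) xs = c l * wedge d (\<beta> \<circ> u(0 := l)) xs"
        using Z by simp
    qed
    also have "\<dots> = (\<lambda>xs. \<Sum>l\<in>I. c l * wedge d (\<beta> \<circ> u(0 := l)) xs)"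
    proof (rule ext, rule sum.mono_neutral_left[OF finI])
      fix xs
      show "L \<subseteq> I" by (auto simp: L_def)
      show "\<forall>i\<in>I - L. c i * wedge d (\<beta> \<circ> u(0 := i)) xs = 0"
      proof
        fix i assume "i \<in> I - L"
        then obtain i' where i': "i' \<in> {1..<d}" "i = u i'" by (auto simp: L_def)
        have "wedge d (\<beta> \<circ> u(0 := i)) = (\<lambda>xs. 0)"
          by (rule wedge_idx_zero[of i']) (use i' in auto)
        then show "c i * wedge d (\<beta> \<circ> u(0 := i)) xs = 0" by simp
      qed
    qed
    also have "\<dots> = (\<lambda>xs. wedge d ((\<beta> \<circ> u)(0 := (\<Sum>l\<in>I. c l *s \<beta> l))) xs)"
      by (rule ext) (simp only: idx_comp wedge_slot0[OF d1 finI])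
    also have "\<dots> = (\<lambda>xs. 0)" unfolding c by (rule ext) (rule wedge_zero_slot[OF d1])
    finally have "\<psi> y = \<psi> (\<lambda>xs. 0)" using psi_zero[OF psi_iso] by simp
    then have y0: "y = (\<lambda>xs. 0)" using injpsi yE zero_in_E by (blast dest: inj_onD)
    define G where "G = (\<lambda>i. ga ((u(0 := m)) i))"
    have "pairing d G y = (\<Sum>l\<in>L. (c l / Z l) * pairing d G (wedge d (\<alpha> \<circ> u(0 := l))))"
      unfolding y_def by (rule pairing_lin[OF finL])
    also have "\<dots> = (\<Sum>l\<in>L. (c l / Z l) * (if l = m then 1 else 0))"
    proof (rule sum.cong[OF refl])
      fix l assume l: "l \<in> L"
      then have lI: "l \<in> I" by (simp add: L_def)
      show "c l / Z l * pairing d G (wedge d (\<alpha> \<circ> u(0 := l))) = c l / Z l * (if l = m then 1 else 0)"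
        unfolding G_def pairing_idx[OF ga u0(2) usub m(1) mU lI d1] ..
    qed
    also have "\<dots> = c m / Z m" by (rule sum_if_eq[OF finL mL])
    finally have pe: "pairing d G y = c m / Z m" .
    have "pairing d G y = 0" unfolding y0 by (rule pairing_zero)
    then have "c m / Z m = 0" using pe by simp
    moreover have "Z m \<noteq> 0" using Z mL by blast
    ultimately show False using m(2) by simp
  qed
  have dualB: "\<exists>g. \<forall>a\<in>I. \<forall>b\<in>I. dotv (g a) (\<beta> b) = (if b = a then 1 else 0)"
  proof -
    have "\<forall>a\<in>I. \<exists>ga. \<forall>b\<in>I. dotv ga (\<beta> b) = (if b = a then 1 else 0)"
      using dual_exists[OF famB finI] by blast
    from bchoice[OF this] show ?thesis by blast
  qed
  then obtain gb where gb: "\<forall>a\<in>I. \<forall>b\<in>I. dotv (gb a) (\<beta> b) = (if b = a then 1 else 0)" by blast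
  show ?thesis
  proof (intro allI impI, elim conjE)
    fix \<zeta>1 \<zeta>2
    assume h1: "\<psi> (wedge d (\<alpha> \<circ> t(0 := j))) = (\<lambda>xs. \<zeta>1 * wedge d (\<beta> \<circ> t(0 := j)) xs)"
      and h2: "\<psi> (wedge d (\<alpha> \<circ> t(0 := h))) = (\<lambda>xs. \<zeta>2 * wedge d (\<beta> \<circ> t(0 := h)) xs)"
    have tsub: "t ` {1..<d} \<subseteq> I" using t_range by blast
    have jT: "j \<notin> t ` {1..<d}" using t_range by blast
    define L where "L = I - t ` {1..<d}"
    have finL: "finite L" using finI by (simp add: L_def)
    have jL: "j \<in> L" using j_in jT by (simp add: L_def)
    have ex: "\<exists>\<zeta>. \<zeta> \<noteq> 0 \<and> \<psi> (wedge d (\<alpha> \<circ> t(0 := l))) = (\<lambda>xs. \<zeta> * wedge d (\<beta> \<circ> t(0 := l)) xs)"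
      if l: "l \<in> L" for l
    proof -
      have lI: "l \<in> I" "l \<notin> t ` {1..<d}" using l by (auto simp: L_def)
      have r: "(t(0 := l)) ` {..<d} \<subseteq> I" by (rule idx_range[OF tsub lI(1)])
      have "lin_indep_fam d (\<alpha> \<circ> t(0 := l))"
        by (rule lin_indep_sub[OF famA idx_inj[OF t_distinct lI(2)] r finI])
      moreover have "(t(0 := l)) ` {..<d} \<subseteq> {1..k}" using r I_sub by blast
      ultimately show ?thesis using psi_wedge by blast
    qed
    have "\<forall>l\<in>L. \<exists>\<zeta>. \<zeta> \<noteq> 0 \<and> \<psi> (wedge d (\<alpha> \<circ> t(0 := l))) = (\<lambda>xs. \<zeta> * wedge d (\<beta> \<circ> t(0 := l)) xs)"
      using ex by blast
    from bchoice[OF this] obtain Z where Z: "\<forall>l\<in>L. Z l \<noteq> 0 \<and>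
        \<psi> (wedge d (\<alpha> \<circ> t(0 := l))) = (\<lambda>xs. Z l * wedge d (\<beta> \<circ> t(0 := l)) xs)" by blast
    define Z' where "Z' l = (if l = j then \<zeta>1 else Z l)" for l
    have psiL: "\<psi> (wedge d (\<alpha> \<circ> t(0 := l))) = (\<lambda>xs. Z' l * wedge d (\<beta> \<circ> t(0 := l)) xs)"
      if "l \<in> L" for l
      using h1 Z that by (cases "l = j") (simp_all add: Z'_def)
    have zeroT: "wedge d (w \<circ> t(0 := i)) = (\<lambda>xs. 0)" if iL: "i \<in> I - L" for i and w :: "nat \<Rightarrow> 'a^'n"
    proof -
      obtain i' where i': "i' \<in> {1..<d}" "i = t i'" using iL by (auto simp: L_def)
      show ?thesis by (rule wedge_idx_zero[of i']) (use i' in auto)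
    qed
    have hA: "wedge d (\<alpha> \<circ> t(0 := h)) = (\<lambda>xs. \<Sum>l\<in>L. a l * wedge d (\<alpha> \<circ> t(0 := l)) xs)"
    proof
      fix xs
      have "wedge d (\<alpha> \<circ> t(0 := h)) xs = (\<Sum>l\<in>I. a l * wedge d (\<alpha> \<circ> t(0 := l)) xs)"
        by (rule wedge_idx_expand[OF d1 finI a_coeffs])
      also have "\<dots> = (\<Sum>l\<in>L. a l * wedge d (\<alpha> \<circ> t(0 := l)) xs)"
        by (rule sum.mono_neutral_right[OF finI]) (auto simp: L_def zeroT)
      finally show "wedge d (\<alpha> \<circ> t(0 := h)) xs = (\<Sum>l\<in>L. a l * wedge d (\<alpha> \<circ> t(0 := l)) xs)" .
    qed
    have "\<psi> (wedge d (\<alpha> \<circ> t(0 := h))) = (\<lambda>xs. \<Sum>l\<in>L. a l * \<psi> (wedge d (\<alpha> \<circ> t(0 := l))) xs)"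
      unfolding hA by (rule psi_sum[OF psi_iso finL])
    also have "\<dots> = (\<lambda>xs. \<Sum>l\<in>L. (a l * Z' l) * wedge d (\<beta> \<circ> t(0 := l)) xs)"
      by (rule ext, rule sum.cong[OF refl]) (simp add: psiL)
    finally have eqn: "(\<lambda>xs. \<zeta>2 * wedge d (\<beta> \<circ> t(0 := h)) xs)
        = (\<lambda>xs. \<Sum>l\<in>L. (a l * Z' l) * wedge d (\<beta> \<circ> t(0 := l)) xs)" using h2 by simp
    define G where "G = (\<lambda>i. gb ((t(0 := j)) i))"
    have pI: "pairing d G (wedge d (\<beta> \<circ> t(0 := l))) = (if l = j then 1 else 0)" if "l \<in> I" for l
      unfolding G_def by (rule pairing_idx[OF gb t_distinct tsub j_in jT that d1])
    have hB: "wedge d (\<beta> \<circ> t(0 := h)) = (\<lambda>xs. \<Sum>l\<in>I. b l * wedge d (\<beta> \<circ> t(0 := l)) xs)"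
      by (rule ext) (rule wedge_idx_expand[OF d1 finI b_coeffs])
    have "pairing d G (\<lambda>xs. \<zeta>2 * wedge d (\<beta> \<circ> t(0 := h)) xs) = \<zeta>2 * b j"
    proof -
      have "pairing d G (\<lambda>xs. \<zeta>2 * wedge d (\<beta> \<circ> t(0 := h)) xs) = \<zeta>2 * pairing d G (wedge d (\<beta> \<circ> t(0 := h)))"
        by (rule pairing_scale)
      also have "pairing d G (wedge d (\<beta> \<circ> t(0 := h))) = (\<Sum>l\<in>I. b l * pairing d G (wedge d (\<beta> \<circ> t(0 := l))))"
        unfolding hB by (rule pairing_lin[OF finI])
      also have "\<dots> = (\<Sum>l\<in>I. b l * (if l = j then 1 else 0))"
        by (rule sum.cong[OF refl]) (simp add: pI)
      also have "\<dots> = b j" by (rule sum_if_eq[OF finI j_in])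
      finally show ?thesis .
    qed
    moreover have "pairing d G (\<lambda>xs. \<Sum>l\<in>L. (a l * Z' l) * wedge d (\<beta> \<circ> t(0 := l)) xs) = a j * \<zeta>1"
    proof -
      have "pairing d G (\<lambda>xs. \<Sum>l\<in>L. (a l * Z' l) * wedge d (\<beta> \<circ> t(0 := l)) xs)
          = (\<Sum>l\<in>L. (a l * Z' l) * pairing d G (wedge d (\<beta> \<circ> t(0 := l))))"
        by (rule pairing_lin[OF finL])
      also have "\<dots> = (\<Sum>l\<in>L. (a l * Z' l) * (if l = j then 1 else 0))"
        by (rule sum.cong[OF refl]) (simp add: pI L_def)
      also have "\<dots> = a j * Z' j" by (rule sum_if_eq[OF finL jL])
      finally show ?thesis by (simp add: Z'_def)
    qed
    ultimately show "\<zeta>1 * a j = \<zeta>2 * b j" using eqn by (simp add: mult.commute)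
  qed
qed

end
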